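(* Let $I$ be an $f$-ideal of $S=K[x_1,\ldots,x_n]$. For an integer $l\in[n]$ with $l<ldeg(I)$, $sm(S)_l\subseteq\sqcap^\infty(G(I))$. On the other hand, if $l>deg(I)$, then $sm(S)_l\subseteq\sqcup^\infty(G(I))$.
   Context: $K$ is a field; $sm(S)_l$ is the set of square-free monomials of degree $l$; $G(I)$ is the minimal monomial generating set; $ldeg(I)$ and $deg(I)$ are the minimal and maximal degrees of elements of $G(I)$. For a set $A$ of square-free monomials, $\sqcup(A)=\{gx_i\mid g\in A,\ x_i\nmid g\}$, $\sqcap(A)=\{h\ne1\mid h=g/x_i \text{ for some } g\in A,\ x_i\mid g\}$, $\sqcup^\infty(A)=\bigcup_{i\ge1}\sqcup^i(A)$, $\sqcap^\infty(A)=\bigcup_{i\ge1}\sqcap^i(A)$. With $\sigma$ the bijection $x_{i_1}\cdots x_{i_k}\mapsto\{i_1,\ldots,i_k\}$, the facet complex $\delta_{\mathcal{F}}(I)$ has facets $\sigma(g)$, $g\in G(I)$, the Stanley–Reisner complex is $\delta_{\mathcal{N}}(I)=\{\sigma(g)\mid g\text{ square-free monomial},\ g\notin I\}$, and a square-free monomial ideal $I$ is an $f$-ideal if both complexes have the same $f$-vector. *)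

theory Defs
  imports Main
begin

text \<open>A square-free monomial x_{i1}...x_{ik} of S = K[x_1,...,x_n] is identified,
  via sigma, with the subset {i1,...,ik} of {1..n}.  A square-free monomial ideal I
  is represented by the family of square-free monomials it contains (an up-closed
  family of subsets of {1..n}); this determines I.\<close>

definition sqfree_monomial_ideal :: "nat \<Rightarrow> nat set set \<Rightarrow> bool" where
  "sqfree_monomial_ideal n U \<longleftrightarrow>
     U \<subseteq> Pow {1..n} \<and> (\<forall>A\<in>U. \<forall>B. A \<subseteq> B \<and> B \<subseteq> {1..n} \<longrightarrow> B \<in> U)"

definition gens :: "nat set set \<Rightarrow> nat set set" where
  "gens U = {g \<in> U. \<forall>h\<in>U. h \<subseteq> g \<longrightarrow> h = g}"

definition ldeg :: "nat set set \<Rightarrow> nat" where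
  "ldeg U = Min (card ` gens U)"

definition deg :: "nat set set \<Rightarrow> nat" where
  "deg U = Max (card ` gens U)"

definition sm :: "nat \<Rightarrow> nat \<Rightarrow> nat set set" where
  "sm n l = {g. g \<subseteq> {1..n} \<and> card g = l}"

definition sq_cup :: "nat \<Rightarrow> nat set set \<Rightarrow> nat set set" where
  "sq_cup n A = {insert i g | g i. g \<in> A \<and> i \<in> {1..n} \<and> i \<notin> g}"

definition sq_cap :: "nat set set \<Rightarrow> nat set set" where
  "sq_cap A = {g - {i} | g i. g \<in> A \<and> i \<in> g \<and> g - {i} \<noteq> {}}"

definition sq_cup_inf :: "nat \<Rightarrow> nat set set \<Rightarrow> nat set set" where
  "sq_cup_inf n A = (\<Union>i\<in>{1..}. (sq_cup n ^^ i) A)"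

definition sq_cap_inf :: "nat set set \<Rightarrow> nat set set" where
  "sq_cap_inf A = (\<Union>i\<in>{1..}. (sq_cap ^^ i) A)"

definition facet_complex :: "nat set set \<Rightarrow> nat set set" where
  "facet_complex U = {F. \<exists>g\<in>gens U. F \<subseteq> g}"

definition sr_complex :: "nat \<Rightarrow> nat set set \<Rightarrow> nat set set" where
  "sr_complex n U = {F. F \<subseteq> {1..n} \<and> F \<notin> U}"

text \<open>f-vector: f_i = number of faces of dimension i (cardinality i+1), i \<ge> 0.\<close>
definition f_vector :: "nat set set \<Rightarrow> nat \<Rightarrow> nat" where
  "f_vector D i = card {F \<in> D. card F = i + 1}"

definition f_ideal :: "nat \<Rightarrow> nat set set \<Rightarrow> bool" where
  "f_ideal n U \<longleftrightarrow> sqfree_monomial_ideal n U \<and>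
     f_vector (facet_complex U) = f_vector (sr_complex n U)"

end

theory Submission
  imports Defs
begin

lemma cap_pow:
  assumes "g \<in> A" "finite g"
  shows "h \<subseteq> g \<Longrightarrow> h \<noteq> {} \<Longrightarrow> card (g - h) = k \<Longrightarrow> h \<in> (sq_cap ^^ k) A"
proof (induction k arbitrary: h)
  case 0
  then have "h = g" using assms(2) by (metis Diff_eq_empty_iff card_0_eq finite_Diff subset_antisym)
  then show ?case using assms by simp
next
  case (Suc k)
  then obtain i where i: "i \<in> g - h" by (metis card.empty ex_in_conv nat.distinct(1))
  let ?h = "insert i h"
  have "card (g - ?h) = k" using Suc.prems i
    by (metis Diff_insert card_Diff_singleton diff_Suc_1)
  then have "?h \<in> (sq_cap ^^ k) A" using Suc i by auto
  moreover have "h = ?h - {i}" using i by auto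
  moreover have "i \<in> ?h" by simp
  ultimately show ?case unfolding funpow.simps o_apply sq_cap_def using Suc.prems(2)
    by blast
qed

lemma cup_pow:
  assumes "g \<in> A" "finite h" "h \<subseteq> {1..n}"
  shows "g \<subseteq> h \<Longrightarrow> h \<subseteq> {1..n} \<Longrightarrow> card (h - g) = k \<Longrightarrow> h \<in> (sq_cup n ^^ k) A"
proof (induction k arbitrary: h)
  case 0
  have "finite h" using 0 finite_subset by blast
  then have "h = g" using 0 by (metis Diff_eq_empty_iff card_0_eq finite_Diff subset_antisym)
  then show ?case using assms by simp
next
  case (Suc k)
  have fh: "finite h" using Suc.prems finite_subset by blast
  obtain i where i: "i \<in> h - g" using Suc.prems by (metis card.empty ex_in_conv nat.distinct(1))
  let ?h = "h - {i}"
  have "card (?h - g) = k" using Suc.prems i fh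
    by (metis Diff_insert2 Diff_insert card_Diff_singleton diff_Suc_1 finite_Diff)
  moreover have "g \<subseteq> ?h" "?h \<subseteq> {1..n}" using Suc.prems i by auto
  ultimately have "?h \<in> (sq_cup n ^^ k) A" using Suc.IH by blast
  moreover have "h = insert i ?h" using i by auto
  moreover have "i \<in> {1..n}" "i \<notin> ?h" using i Suc.prems by auto
  ultimately show ?case unfolding funpow.simps o_apply sq_cup_def
    by blast
qed

lemma min_gen:
  assumes "finite x" "x \<in> U"
  shows "\<exists>g\<in>gens U. g \<subseteq> x"
  using assms
proof (induction "card x" arbitrary: x rule: less_induct)
  case less
  show ?case
  proof (cases "x \<in> gens U")
    case True then show ?thesis by blast
  next
    case False
    then obtain h where h: "h \<in> U" "h \<subseteq> x" "h \<noteq> x" using less.prems unfolding gens_def by auto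
    then have "card h < card x" using less.prems by (meson psubsetI psubset_card_mono)
    then obtain g where "g \<in> gens U" "g \<subseteq> h" using less h by (meson finite_subset)
    then show ?thesis using h by blast
  qed
qed

theorem corollary6p4:
  fixes n l :: nat and U :: "nat set set"
  assumes "f_ideal n U"
    and "l \<in> {1..n}"
  shows "(l < ldeg U \<longrightarrow> sm n l \<subseteq> sq_cap_inf (gens U))
       \<and> (l > deg U \<longrightarrow> sm n l \<subseteq> sq_cup_inf n (gens U))"
proof -
  have sq: "sqfree_monomial_ideal n U" and fv: "f_vector (facet_complex U) = f_vector (sr_complex n U)"
    using assms(1) unfolding f_ideal_def by auto
  have UP: "U \<subseteq> Pow {1..n}" using sq unfolding sqfree_monomial_ideal_def by auto
  have gU: "gens U \<subseteq> U" unfolding gens_def by auto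
  have fing: "finite (gens U)" using UP gU by (meson finite_Pow_iff finite_atLeastAtMost finite_subset)
  have l1: "l - 1 + 1 = l" using assms(2) by auto
  have fvl: "card {F \<in> facet_complex U. card F = l} = card {F \<in> sr_complex n U. card F = l}"
    using fun_cong[OF fv, of "l - 1"] unfolding f_vector_def l1 .
  have finsm: "finite (sm n l)" unfolding sm_def by (rule finite_subset[of _ "Pow {1..n}"]) auto
  have facsub: "{F \<in> facet_complex U. card F = l} \<subseteq> sm n l"
    unfolding facet_complex_def sm_def using UP gU by blast
  have finsr: "finite {F \<in> sr_complex n U. card F = l}"
    unfolding sr_complex_def by (rule finite_subset[of _ "Pow {1..n}"]) auto
  show ?thesis
  proof (intro conjI impI subsetI)
    fix x assume lt: "l < ldeg U" and x: "x \<in> sm n l"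
    have notU: "y \<notin> U" if "y \<in> sm n l" for y
    proof
      assume "y \<in> U"
      moreover have "finite y" using that unfolding sm_def using finite_subset by auto
      ultimately obtain g where g: "g \<in> gens U" "g \<subseteq> y" using min_gen by blast
      have "card g \<le> card y" using g \<open>finite y\<close> by (simp add: card_mono)
      then have "card g \<le> l" using that unfolding sm_def by simp
      moreover have "ldeg U \<le> card g" unfolding ldeg_def using g fing by (simp add: Min_le)
      ultimately show False using lt by auto
    qed
    have "{F \<in> sr_complex n U. card F = l} = sm n l"
      unfolding sr_complex_def using notU unfolding sm_def by auto
    then have "card {F \<in> facet_complex U. card F = l} = card (sm n l)" using fvl by simp
    then have "{F \<in> facet_complex U. card F = l} = sm n l"
      using card_subset_eq[OF finsm facsub] by simp
    then have "x \<in> facet_complex U" using x by auto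
    then obtain g where g: "g \<in> gens U" "x \<subseteq> g" unfolding facet_complex_def by auto
    have fg: "finite g" using g UP gU by (meson PowD finite_atLeastAtMost finite_subset subsetD)
    have "card g \<ge> ldeg U" unfolding ldeg_def using g fing by (simp add: Min_le)
    moreover have cx: "card x = l" using x unfolding sm_def by auto
    ultimately have "x \<noteq> g" using lt by auto
    then have "card x < card g" using g fg by (meson psubsetI psubset_card_mono)
    then have pos: "card (g - x) \<ge> 1" using fg g card_Diff_subset[of x g] finite_subset by fastforce
    have "x \<noteq> {}" using cx assms(2) by auto
    then have "x \<in> (sq_cap ^^ card (g - x)) (gens U)" using cap_pow[OF g(1) fg g(2)] by blast
    then show "x \<in> sq_cap_inf (gens U)" unfolding sq_cap_inf_def using pos by auto
  next
    fix x assume gt: "deg U < l" and x: "x \<in> sm n l"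
    have "{F \<in> facet_complex U. card F = l} = {}"
    proof (rule ccontr)
      assume "{F \<in> facet_complex U. card F = l} \<noteq> {}"
      then obtain F g where F: "card F = l" "g \<in> gens U" "F \<subseteq> g" unfolding facet_complex_def by auto
      have fg: "finite g" using F UP gU by (meson PowD finite_atLeastAtMost finite_subset subsetD)
      have "card F \<le> card g" using F fg card_mono by auto
      moreover have "card g \<le> deg U" unfolding deg_def using F fing by (simp add: Max_ge)
      ultimately show False using F gt by auto
    qed
    then have "card {F \<in> sr_complex n U. card F = l} = 0" using fvl by (metis card.empty)
    then have "{F \<in> sr_complex n U. card F = l} = {}" using finsr by simp
    then have xU: "x \<in> U" using x unfolding sr_complex_def sm_def by auto
    have xs: "x \<subseteq> {1..n}" "card x = l" using x unfolding sm_def by auto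
    have fx: "finite x" using xs finite_subset by auto
    obtain g where g: "g \<in> gens U" "g \<subseteq> x" using min_gen[OF fx xU] by blast
    have "card g \<le> deg U" unfolding deg_def using g fing by (simp add: Max_ge)
    then have "card g < card x" using xs gt by auto
    then have pos: "card (x - g) \<ge> 1" using fx g card_Diff_subset[of g x] finite_subset by fastforce
    have "x \<in> (sq_cup n ^^ card (x - g)) (gens U)" using cup_pow[OF g(1) fx xs(1) g(2) xs(1)] by blast
    then show "x \<in> sq_cup_inf n (gens U)" unfolding sq_cup_inf_def using pos by auto
  qed
qed

end
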